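(* Let $G$ and $H$ be finite simple graphs without isolated vertices, each of order at least three, and let $f=(V_0,V_1,V_2)$ be a $\gamma_{tR}(G\times H)$-function with $|V_2|$ as large as possible among all $\gamma_{tR}(G\times H)$-functions. The following are equivalent: (i) $G$ and $H$ are both triangle centered; (ii) $\gamma_{tR}(G\times H)=6$; (iii) $|V_1\cup V_2|=3$.
   Context: A total Roman dominating function on a graph $X$ without isolated vertices is a map $f:V(X)\to\{0,1,2\}$, written $f=(V_0,V_1,V_2)$ with $V_i=\{v:f(v)=i\}$, such that every vertex of $V_0$ has a neighbor in $V_2$ and the subgraph induced by $V_1\cup V_2$ has no isolated vertices; $\gamma_{tR}(X)$ is the minimum of $\sum_v f(v)$ over such $f$, and a $\gamma_{tR}(X)$-function is one attaining this minimum. $G$ is triangle centered if it contains a triangle $xyz$ such that every vertex of $G$ is adjacent to at least two vertices of $\{x,y,z\}$. The direct product $G\times H$ has vertex set $V(G)\times V(H)$, with $(g,h)(g',h')$ an edge iff $gg'\in E(G)$ and $hh'\in E(H)$. *)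

theory Defs
  imports Main
begin

definition simple_graph :: "'a set \<Rightarrow> ('a \<Rightarrow> 'a \<Rightarrow> bool) \<Rightarrow> bool" where
  "simple_graph V E \<longleftrightarrow> finite V \<and> (\<forall>x y. E x y \<longrightarrow> x \<in> V \<and> y \<in> V)
     \<and> (\<forall>x y. E x y \<longrightarrow> E y x) \<and> (\<forall>x. \<not> E x x)"

definition no_isolated :: "'a set \<Rightarrow> ('a \<Rightarrow> 'a \<Rightarrow> bool) \<Rightarrow> bool" where
  "no_isolated V E \<longleftrightarrow> (\<forall>v\<in>V. \<exists>u\<in>V. E v u)"

definition dprod_V :: "'a set \<Rightarrow> 'b set \<Rightarrow> ('a \<times> 'b) set" where
  "dprod_V VG VH = VG \<times> VH"

definition dprod_E :: "('a \<Rightarrow> 'a \<Rightarrow> bool) \<Rightarrow> ('b \<Rightarrow> 'b \<Rightarrow> bool) \<Rightarrow> ('a \<times> 'b) \<Rightarrow> ('a \<times> 'b) \<Rightarrow> bool" where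
  "dprod_E EG EH = (\<lambda>(g,h) (g',h'). EG g g' \<and> EH h h')"

text \<open>Total Roman dominating function f = (V0,V1,V2); values outside V are fixed to 0.\<close>
definition is_TRDF :: "'a set \<Rightarrow> ('a \<Rightarrow> 'a \<Rightarrow> bool) \<Rightarrow> ('a \<Rightarrow> nat) \<Rightarrow> bool" where
  "is_TRDF V E f \<longleftrightarrow>
     (\<forall>v. v \<notin> V \<longrightarrow> f v = 0) \<and> (\<forall>v\<in>V. f v \<le> 2)
     \<and> (\<forall>v\<in>V. f v = 0 \<longrightarrow> (\<exists>u\<in>V. E v u \<and> f u = 2))
     \<and> (\<forall>v\<in>V. f v \<ge> 1 \<longrightarrow> (\<exists>u\<in>V. E v u \<and> f u \<ge> 1))"

definition weight :: "'a set \<Rightarrow> ('a \<Rightarrow> nat) \<Rightarrow> nat" where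
  "weight V f = (\<Sum>v\<in>V. f v)"

definition gamma_tR :: "'a set \<Rightarrow> ('a \<Rightarrow> 'a \<Rightarrow> bool) \<Rightarrow> nat" where
  "gamma_tR V E = (LEAST w. \<exists>f. is_TRDF V E f \<and> weight V f = w)"

definition gamma_tR_function :: "'a set \<Rightarrow> ('a \<Rightarrow> 'a \<Rightarrow> bool) \<Rightarrow> ('a \<Rightarrow> nat) \<Rightarrow> bool" where
  "gamma_tR_function V E f \<longleftrightarrow> is_TRDF V E f \<and> weight V f = gamma_tR V E"

definition triangle_centered :: "'a set \<Rightarrow> ('a \<Rightarrow> 'a \<Rightarrow> bool) \<Rightarrow> bool" where
  "triangle_centered V E \<longleftrightarrow> (\<exists>x\<in>V. \<exists>y\<in>V. \<exists>z\<in>V. E x y \<and> E y z \<and> E x z \<and>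
     (\<forall>v\<in>V. card ({x, y, z} \<inter> {u. E v u}) \<ge> 2))"

end

theory Submission
  imports Defs
begin



lemma tc_intro:
  assumes sg: "simple_graph V E" and xyz: "x\<in>V" "y\<in>V" "z\<in>V" "E x y" "E y z" "E x z"
    and cov: "\<And>v. v\<in>V \<Longrightarrow> (E v x \<and> E v y) \<or> (E v x \<and> E v z) \<or> (E v y \<and> E v z)"
  shows "triangle_centered V E"
proof -
  have irr: "\<And>a. \<not> E a a" using sg by (simp add: simple_graph_def)
  have d: "x \<noteq> y" "y \<noteq> z" "x \<noteq> z" using xyz irr by metis+
  have "\<forall>v\<in>V. card ({x, y, z} \<inter> {u. E v u}) \<ge> 2"
  proof
    fix v assume "v \<in> V"
    have fin: "finite ({x, y, z} \<inter> {u. E v u})" by simp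
    from cov[OF \<open>v\<in>V\<close>] show "card ({x, y, z} \<inter> {u. E v u}) \<ge> 2"
    proof (elim disjE conjE)
      assume "E v x" "E v y"
      hence "{x,y} \<subseteq> {x, y, z} \<inter> {u. E v u}" by auto
      from card_mono[OF fin this] show ?thesis using d by simp
    next
      assume "E v x" "E v z"
      hence "{x,z} \<subseteq> {x, y, z} \<inter> {u. E v u}" by auto
      from card_mono[OF fin this] show ?thesis using d by simp
    next
      assume "E v y" "E v z"
      hence "{y,z} \<subseteq> {x, y, z} \<inter> {u. E v u}" by auto
      from card_mono[OF fin this] show ?thesis using d by simp
    qed
  qed
  thus ?thesis unfolding triangle_centered_def using xyz by blast
qed

lemma card_pair:
  assumes "card ({x,y,z} \<inter> A) \<ge> 2"
  shows "(x\<in>A \<and> y\<in>A) \<or> (x\<in>A \<and> z\<in>A) \<or> (y\<in>A \<and> z\<in>A)"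
  using assms by (cases "x\<in>A"; cases "y\<in>A"; cases "z\<in>A") auto

lemma tc_elim:
  assumes "triangle_centered V E"
  obtains x y z where "x\<in>V" "y\<in>V" "z\<in>V" "E x y" "E y z" "E x z"
    "\<And>v. v\<in>V \<Longrightarrow> (E v x \<and> E v y) \<or> (E v x \<and> E v z) \<or> (E v y \<and> E v z)"
proof -
  from assms obtain x y z where xyz: "x\<in>V" "y\<in>V" "z\<in>V" "E x y" "E y z" "E x z"
    and c: "\<forall>v\<in>V. card ({x, y, z} \<inter> {u. E v u}) \<ge> 2"
    unfolding triangle_centered_def by blast
  have "\<And>v. v\<in>V \<Longrightarrow> (E v x \<and> E v y) \<or> (E v x \<and> E v z) \<or> (E v y \<and> E v z)"
    using card_pair c by fastforce
  thus ?thesis using xyz that by blast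
qed

lemma extra_elem:
  assumes "finite A" "card A \<ge> 3" 
  shows "\<exists>c\<in>A. c \<noteq> a \<and> c \<noteq> b"
proof -
  have "card A - card {a,b} \<le> card (A - {a,b})" by (rule diff_card_le_card_Diff) simp
  moreover have "card {a,b} \<le> 2" by (simp add: card_insert_le_m1)
  ultimately have "card (A - {a,b}) > 0" using assms by linarith
  hence "A - {a,b} \<noteq> {}" by (metis card.empty less_irrefl)
  thus ?thesis by blast
qed

lemma weight_eq:
  assumes "finite V" "\<forall>v\<in>V. f v \<le> 2"
  shows "weight V f = card {v\<in>V. f v \<ge> 1} + card {v\<in>V. f v = 2}"
proof -
  have "weight V f = (\<Sum>v\<in>V. (if f v \<ge> 1 then 1 else 0) + (if f v = 2 then 1 else 0))"
    unfolding weight_def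
  proof (rule sum.cong)
    fix v assume "v\<in>V" hence "f v \<le> 2" using assms by auto
    thus "f v = (if f v \<ge> 1 then 1 else 0) + (if f v = 2 then 1 else 0)" by auto
  qed simp
  also have "\<dots> = (\<Sum>v\<in>V. if f v \<ge> 1 then 1 else 0) + (\<Sum>v\<in>V. if f v = 2 then 1 else 0)"
    by (rule sum.distrib)
  also have "\<dots> = card {v\<in>V. f v \<ge> 1} + card {v\<in>V. f v = 2}"
    using assms(1) by (simp add: sum.inter_filter[symmetric])
  finally show ?thesis .
qed




locale GP =
  fixes VG :: "'a set" and EG :: "'a \<Rightarrow> 'a \<Rightarrow> bool"
    and VH :: "'b set" and EH :: "'b \<Rightarrow> 'b \<Rightarrow> bool"
  assumes sG: "simple_graph VG EG" and nG: "no_isolated VG EG" and cG: "card VG \<ge> 3"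
    and sH: "simple_graph VH EH" and nH: "no_isolated VH EH" and cH: "card VH \<ge> 3"
begin

abbreviation "PV \<equiv> dprod_V VG VH"
abbreviation "PE \<equiv> dprod_E EG EH"

lemma finG: "finite VG" and inG: "EG x y \<Longrightarrow> x \<in> VG \<and> y \<in> VG"
  and symG: "EG x y \<Longrightarrow> EG y x" and irG: "\<not> EG x x"
  using sG by (auto simp: simple_graph_def)
lemma finH: "finite VH" and inH: "EH x y \<Longrightarrow> x \<in> VH \<and> y \<in> VH"
  and symH: "EH x y \<Longrightarrow> EH y x" and irH: "\<not> EH x x"
  using sH by (auto simp: simple_graph_def)

lemma E_iff[simp]: "PE (g,h) (g',h') \<longleftrightarrow> EG g g' \<and> EH h h'"
  by (simp add: dprod_E_def)
lemma V_iff[simp]: "(g,h) \<in> PV \<longleftrightarrow> g \<in> VG \<and> h \<in> VH"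
  by (simp add: dprod_V_def)
lemma finV: "finite PV" using finG finH by (simp add: dprod_V_def)
lemma cardV: "card PV \<ge> 9"
proof -
  have "card PV = card VG * card VH" by (simp add: dprod_V_def card_cartesian_product)
  also have "\<dots> \<ge> 3 * 3" using cG cH by (intro mult_mono) auto
  finally show ?thesis by simp
qed

lemma trdf:
  assumes "is_TRDF PV PE f"
  shows "\<And>v. v \<notin> PV \<Longrightarrow> f v = 0" "\<And>v. v\<in>PV \<Longrightarrow> f v \<le> 2"
    "\<And>v. v\<in>PV \<Longrightarrow> f v = 0 \<Longrightarrow> \<exists>u\<in>PV. PE v u \<and> f u = 2"
    "\<And>v. v\<in>PV \<Longrightarrow> f v \<ge> 1 \<Longrightarrow> \<exists>u\<in>PV. PE v u \<and> f u \<ge> 1"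
  using assms unfolding is_TRDF_def by auto

lemma weightf: "is_TRDF PV PE f \<Longrightarrow>
  weight PV f = card {v\<in>PV. f v \<ge> 1} + card {v\<in>PV. f v = 2}"
  using weight_eq[OF finV] trdf(2) by blast

lemma T_sub_S: "{v\<in>PV. f v = 2} \<subseteq> {v\<in>PV. f v \<ge> 1}" for f :: "'a\<times>'b \<Rightarrow> nat" by auto
lemma card_T_S: "card {v\<in>PV. f v = 2} \<le> card {v\<in>PV. f v \<ge> 1}" for f :: "'a\<times>'b \<Rightarrow> nat"
  using finV by (intro card_mono) auto

lemma uncovered:
  assumes tr: "is_TRDF PV PE f" and v: "(g,h) \<in> PV"
    and nc: "\<And>g' h'. f (g',h') = 2 \<Longrightarrow> \<not> (EG g g' \<and> EH h h')"
  shows "f (g,h) \<ge> 1"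
proof (rule ccontr)
  assume "\<not> f (g,h) \<ge> 1" hence "f (g,h) = 0" by simp
  from trdf(3)[OF tr v this] obtain u where "u\<in>PV" "PE (g,h) u" "f u = 2" by blast
  thus False using nc by (cases u) auto
qed

end



context GP begin

lemma T2:
  fixes f :: "'a\<times>'b \<Rightarrow> nat"
  assumes tr: "is_TRDF PV PE f" and T: "{v\<in>PV. f v = 2} = {(g1,h1),(g2,h2)}"
    and ne: "(g1,h1) \<noteq> (g2,h2)" and cS: "card {v\<in>PV. f v \<ge> 1} \<le> 4"
  shows "card {v\<in>PV. f v \<ge> 1} = 4 \<and> triangle_centered VG EG \<and> triangle_centered VH EH"
proof -
  define S where "S = {v\<in>PV. f v \<ge> 1}"
  have finS: "finite S" unfolding S_def using finV by simp
  have two: "\<And>v. f v = 2 \<longleftrightarrow> v = (g1,h1) \<or> v = (g2,h2)"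
  proof -
    fix v show "f v = 2 \<longleftrightarrow> v = (g1,h1) \<or> v = (g2,h2)"
    proof (cases "v \<in> PV")
      case True thus ?thesis using T by blast
    next
      case False thus ?thesis using trdf(1)[OF tr False] T by auto
    qed
  qed
  have uT: "(g1,h1) \<in> {v\<in>PV. f v = 2}" "(g2,h2) \<in> {v\<in>PV. f v = 2}"
    by (simp only: T; simp)+
  have uV: "(g1,h1) \<in> PV" "(g2,h2) \<in> PV" using uT by (simp_all only: mem_Collect_eq)
  have inS: "\<And>g h. (g,h) \<in> PV \<Longrightarrow> (g,h) \<notin> S \<Longrightarrow> (EG g g1 \<and> EH h h1) \<or> (EG g g2 \<and> EH h h2)"
  proof (rule ccontr)
    fix g h assume a: "(g,h) \<in> PV" "(g,h) \<notin> S" "\<not> ((EG g g1 \<and> EH h h1) \<or> (EG g g2 \<and> EH h h2))"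
    have "f (g,h) \<ge> 1" by (rule uncovered[OF tr a(1)]) (use a(3) two in auto)
    thus False using a unfolding S_def by auto
  qed
  have Sm: "\<And>v. v \<in> S \<Longrightarrow> \<exists>u\<in>S. PE v u"
  proof -
    fix v assume "v \<in> S"
    hence "v \<in> PV" "f v \<ge> 1" unfolding S_def by auto
    from trdf(4)[OF tr this] show "\<exists>u\<in>S. PE v u" unfolding S_def by blast
  qed
  have "f (g1,h1) = 2" "f (g2,h2) = 2" using two by blast+
  hence u1S: "(g1,h1) \<in> S" and u2S: "(g2,h2) \<in> S" using uV unfolding S_def by auto
  have gcase: False if eq: "g1 = g2" for dummy :: bool
  proof -
    have sub1: "{g1} \<times> VH \<subseteq> S"
    proof
      fix v assume "v \<in> {g1} \<times> VH"
      then obtain h where v: "v = (g1,h)" "h \<in> VH" by auto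
      show "v \<in> S"
      proof (rule ccontr)
        assume "v \<notin> S"
        from inS[of g1 h] this v uV eq show False using irG by auto
      qed
    qed
    obtain x where x: "x \<in> S" "PE (g1,h1) x" using Sm[OF u1S] by blast
    obtain a b where ab: "x = (a,b)" by (cases x)
    have "EG g1 a" "EH h1 b" using x ab by auto
    hence "a \<noteq> g1" "b \<in> VH" using irG inH by auto
    have "x \<notin> {g1} \<times> VH" using ab \<open>a \<noteq> g1\<close> by auto
    have cardI: "card (insert x ({g1} \<times> VH)) = card VH + 1"
      using \<open>x \<notin> {g1} \<times> VH\<close> finH by (simp add: card_cartesian_product)
    have sub2: "insert x ({g1} \<times> VH) \<subseteq> S" using sub1 x by auto
    have "card S \<le> 4" using cS S_def by simp
    hence Seq: "insert x ({g1} \<times> VH) = S"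
      using card_subset_eq[OF finS sub2] card_mono[OF finS sub2] cardI cH by linarith
    have "(g1,b) \<in> S" using sub1 \<open>b\<in>VH\<close> by auto
    then obtain y where y: "y \<in> S" "PE (g1,b) y" using Sm by blast
    then obtain c d where cd: "y = (c,d)" by (cases y)
    from y cd Seq have "y = x \<or> c = g1" by auto
    thus False using y cd ab irG irH by auto
  qed
  have hcase: False if eq: "h1 = h2" for dummy :: bool
  proof -
    have sub1: "VG \<times> {h1} \<subseteq> S"
    proof
      fix v assume "v \<in> VG \<times> {h1}"
      then obtain g where v: "v = (g,h1)" "g \<in> VG" by auto
      show "v \<in> S"
      proof (rule ccontr)
        assume "v \<notin> S"
        from inS[of g h1] this v uV eq show False using irH by auto
      qed
    qed
    obtain x where x: "x \<in> S" "PE (g1,h1) x" using Sm[OF u1S] by blast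
    obtain a b where ab: "x = (a,b)" by (cases x)
    have "EG g1 a" "EH h1 b" using x ab by auto
    hence "b \<noteq> h1" "a \<in> VG" using irH inG by auto
    have "x \<notin> VG \<times> {h1}" using ab \<open>b \<noteq> h1\<close> by auto
    have cardI: "card (insert x (VG \<times> {h1})) = card VG + 1"
      using \<open>x \<notin> VG \<times> {h1}\<close> finG by (simp add: card_cartesian_product)
    have sub2: "insert x (VG \<times> {h1}) \<subseteq> S" using sub1 x by auto
    have "card S \<le> 4" using cS S_def by simp
    hence Seq: "insert x (VG \<times> {h1}) = S"
      using card_subset_eq[OF finS sub2] card_mono[OF finS sub2] cardI cG by linarith
    have "(a,h1) \<in> S" using sub1 \<open>a\<in>VG\<close> by auto
    then obtain y where y: "y \<in> S" "PE (a,h1) y" using Sm by blast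
    then obtain c d where cd: "y = (c,d)" by (cases y)
    from y cd Seq have "y = x \<or> d = h1" by auto
    thus False using y cd ab irG irH by auto
  qed
  have gne: "g1 \<noteq> g2" using gcase by blast
  have hne: "h1 \<noteq> h2" using hcase by blast
  have pS: "(g1,h2) \<in> S" using inS[of g1 h2] uV irG irH by auto
  have qS: "(g2,h1) \<in> S" using inS[of g2 h1] uV irG irH by auto
  have sub: "{(g1,h1),(g2,h2),(g1,h2),(g2,h1)} \<subseteq> S" using pS qS u1S u2S by auto
  have c4: "card {(g1,h1),(g2,h2),(g1,h2),(g2,h1)} = 4" using gne hne by auto
  have "card S \<le> 4" using cS S_def by simp
  hence Seq: "{(g1,h1),(g2,h2),(g1,h2),(g2,h1)} = S"
    using card_subset_eq[OF finS sub] card_mono[OF finS sub] c4 by linarith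
  have c4S: "card S = 4" using Seq c4 by simp
  obtain y where y: "y \<in> S" "PE (g1,h1) y" using Sm[OF u1S] by blast
  hence "y = (g2,h2)" using Seq[symmetric] irG irH by auto
  hence e12: "EG g1 g2" "EH h1 h2" using y by auto
  have gout: "EG g3 g1 \<and> EG g3 g2" if "g3 \<in> VG" "g3 \<noteq> g1" "g3 \<noteq> g2" for g3
  proof -
    have "(g3,h1) \<notin> S" "(g3,h2) \<notin> S" using Seq[symmetric] that by auto
    thus ?thesis using inS[of g3 h1] inS[of g3 h2] uV that irH by auto
  qed
  have hout: "EH h3 h1 \<and> EH h3 h2" if "h3 \<in> VH" "h3 \<noteq> h1" "h3 \<noteq> h2" for h3
  proof -
    have "(g1,h3) \<notin> S" "(g2,h3) \<notin> S" using Seq[symmetric] that by auto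
    thus ?thesis using inS[of g1 h3] inS[of g2 h3] uV that irG by auto
  qed
  obtain g3 where g3: "g3 \<in> VG" "g3 \<noteq> g1" "g3 \<noteq> g2" using extra_elem[OF finG cG] by blast
  obtain h3 where h3: "h3 \<in> VH" "h3 \<noteq> h1" "h3 \<noteq> h2" using extra_elem[OF finH cH] by blast
  have tG: "triangle_centered VG EG"
  proof (rule tc_intro[OF sG, of g1 g2 g3])
    show "g1 \<in> VG" "g2 \<in> VG" "g3 \<in> VG" using uV g3 by auto
    show "EG g1 g2" by (rule e12)
    show "EG g2 g3" "EG g1 g3" using gout[OF g3] symG by auto
    fix v assume "v \<in> VG"
    show "EG v g1 \<and> EG v g2 \<or> EG v g1 \<and> EG v g3 \<or> EG v g2 \<and> EG v g3"
      using gout[OF g3] gout[OF \<open>v\<in>VG\<close>] e12 symG by (cases "v = g1"; cases "v = g2") auto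
  qed
  have tH: "triangle_centered VH EH"
  proof (rule tc_intro[OF sH, of h1 h2 h3])
    show "h1 \<in> VH" "h2 \<in> VH" "h3 \<in> VH" using uV h3 by auto
    show "EH h1 h2" by (rule e12)
    show "EH h2 h3" "EH h1 h3" using hout[OF h3] symH by auto
    fix v assume "v \<in> VH"
    show "EH v h1 \<and> EH v h2 \<or> EH v h1 \<and> EH v h3 \<or> EH v h2 \<and> EH v h3"
      using hout[OF h3] hout[OF \<open>v\<in>VH\<close>] e12 symH by (cases "v = h1"; cases "v = h2") auto
  qed
  show ?thesis using c4S tG tH S_def by simp
qed

end



context GP begin

lemma Qfacts:
  fixes f :: "'a\<times>'b \<Rightarrow> nat"
  assumes tr: "is_TRDF PV PE f"
    and Q: "\<And>v. (f v \<ge> 1 \<longleftrightarrow> v \<in> {(g1,h1),(g2,h2),(g3,h3)}) \<and> (f v = 2 \<longleftrightarrow> v \<in> {(g1,h1),(g2,h2),(g3,h3)})"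
  shows "\<And>v. f v \<ge> 1 \<Longrightarrow> v = (g1,h1) \<or> v = (g2,h2) \<or> v = (g3,h3)"
    and "\<And>v. f v = 2 \<Longrightarrow> v = (g1,h1) \<or> v = (g2,h2) \<or> v = (g3,h3)"
    and "\<And>v. v \<noteq> (g1,h1) \<Longrightarrow> v \<noteq> (g2,h2) \<Longrightarrow> v \<noteq> (g3,h3) \<Longrightarrow> f v = 0"
    and "f (g1,h1) = 2" "f (g2,h2) = 2" "f (g3,h3) = 2"
    and "g1 \<in> VG" "g2 \<in> VG" "g3 \<in> VG" "h1 \<in> VH" "h2 \<in> VH" "h3 \<in> VH"
proof -
  have A: "\<And>v. f v \<ge> 1 \<longleftrightarrow> v \<in> {(g1,h1),(g2,h2),(g3,h3)}" using Q by blast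
  have B: "\<And>v. f v = 2 \<longleftrightarrow> v \<in> {(g1,h1),(g2,h2),(g3,h3)}" using Q by blast
  show "\<And>v. f v \<ge> 1 \<Longrightarrow> v = (g1,h1) \<or> v = (g2,h2) \<or> v = (g3,h3)" using A by blast
  show "\<And>v. f v = 2 \<Longrightarrow> v = (g1,h1) \<or> v = (g2,h2) \<or> v = (g3,h3)" using B by blast
  show "\<And>v. v \<noteq> (g1,h1) \<Longrightarrow> v \<noteq> (g2,h2) \<Longrightarrow> v \<noteq> (g3,h3) \<Longrightarrow> f v = 0"
  proof -
    fix v assume "v \<noteq> (g1,h1)" "v \<noteq> (g2,h2)" "v \<noteq> (g3,h3)"
    hence "\<not> f v \<ge> 1" using A by blast
    thus "f v = 0" by simp
  qed
  show f2: "f (g1,h1) = 2" "f (g2,h2) = 2" "f (g3,h3) = 2" using B by blast+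
  have "(g1,h1) \<in> PV" "(g2,h2) \<in> PV" "(g3,h3) \<in> PV"
    using f2 trdf(1)[OF tr] by (metis zero_neq_numeral)+
  thus "g1 \<in> VG" "g2 \<in> VG" "g3 \<in> VG" "h1 \<in> VH" "h2 \<in> VH" "h3 \<in> VH" by auto
qed

lemma gdist:
  fixes f :: "'a\<times>'b \<Rightarrow> nat"
  assumes tr: "is_TRDF PV PE f"
    and Q: "\<And>v. (f v \<ge> 1 \<longleftrightarrow> v \<in> {(g1,h1),(g2,h2),(g3,h3)}) \<and> (f v = 2 \<longleftrightarrow> v \<in> {(g1,h1),(g2,h2),(g3,h3)})"
  shows "g1 \<noteq> g2"
proof
  assume eq: "g1 = g2"
  note F = Qfacts[OF tr Q]
  have V1: "(g1,h1) \<in> PV" "(g2,h2) \<in> PV" using F(7,8,10,11) by auto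
  obtain y where y: "y \<in> PV" "PE (g1,h1) y" "f y \<ge> 1" using trdf(4)[OF tr V1(1)] F(4) by auto
  have "y = (g1,h1) \<or> y = (g2,h2) \<or> y = (g3,h3)" using F(1)[OF y(3)] .
  hence a: "EG g1 g3" "EH h1 h3" using y(2) eq irG by auto
  obtain y' where y': "y' \<in> PV" "PE (g2,h2) y'" "f y' \<ge> 1" using trdf(4)[OF tr V1(2)] F(5) by auto
  have "y' = (g1,h1) \<or> y' = (g2,h2) \<or> y' = (g3,h3)" using F(1)[OF y'(3)] .
  hence b: "EH h2 h3" using y'(2) eq irG by auto
  have v: "(g1,h3) \<in> PV" using F(7,12) by auto
  have "f (g1,h3) = 0" by (rule F(3)) (use a b irG irH in auto)
  from trdf(3)[OF tr v this] obtain z where z: "PE (g1,h3) z" "f z = 2" by blast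
  have "z = (g1,h1) \<or> z = (g2,h2) \<or> z = (g3,h3)" using F(2)[OF z(2)] .
  thus False using z(1) eq irG irH by auto
qed

lemma hdist:
  fixes f :: "'a\<times>'b \<Rightarrow> nat"
  assumes tr: "is_TRDF PV PE f"
    and Q: "\<And>v. (f v \<ge> 1 \<longleftrightarrow> v \<in> {(g1,h1),(g2,h2),(g3,h3)}) \<and> (f v = 2 \<longleftrightarrow> v \<in> {(g1,h1),(g2,h2),(g3,h3)})"
  shows "h1 \<noteq> h2"
proof
  assume eq: "h1 = h2"
  note F = Qfacts[OF tr Q]
  have V1: "(g1,h1) \<in> PV" "(g2,h2) \<in> PV" using F(7,8,10,11) by auto
  obtain y where y: "y \<in> PV" "PE (g1,h1) y" "f y \<ge> 1" using trdf(4)[OF tr V1(1)] F(4) by auto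
  have "y = (g1,h1) \<or> y = (g2,h2) \<or> y = (g3,h3)" using F(1)[OF y(3)] .
  hence a: "EG g1 g3" "EH h1 h3" using y(2) eq irH by auto
  obtain y' where y': "y' \<in> PV" "PE (g2,h2) y'" "f y' \<ge> 1" using trdf(4)[OF tr V1(2)] F(5) by auto
  have "y' = (g1,h1) \<or> y' = (g2,h2) \<or> y' = (g3,h3)" using F(1)[OF y'(3)] .
  hence b: "EG g2 g3" using y'(2) eq irH by auto
  have v: "(g3,h1) \<in> PV" using F(9,10) by auto
  have "f (g3,h1) = 0" by (rule F(3)) (use a b irG irH in auto)
  from trdf(3)[OF tr v this] obtain z where z: "PE (g3,h1) z" "f z = 2" by blast
  have "z = (g1,h1) \<or> z = (g2,h2) \<or> z = (g3,h3)" using F(2)[OF z(2)] .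
  thus False using z(1) eq irG irH by auto
qed

lemma gcover:
  fixes f :: "'a\<times>'b \<Rightarrow> nat"
  assumes tr: "is_TRDF PV PE f"
    and Q: "\<And>v. (f v \<ge> 1 \<longleftrightarrow> v \<in> {(g1,h1),(g2,h2),(g3,h3)}) \<and> (f v = 2 \<longleftrightarrow> v \<in> {(g1,h1),(g2,h2),(g3,h3)})"
    and d: "g1 \<noteq> g2" "g1 \<noteq> g3" "h1 \<noteq> h2" "h1 \<noteq> h3"
    and g: "g \<in> VG" "\<not> EG g g2" "\<not> EG g g3"
  shows False
proof -
  note F = Qfacts[OF tr Q]
  have v: "(g,h1) \<in> PV" using F(10) g by auto
  have "f (g,h1) \<ge> 1"
  proof (rule ccontr)
    assume "\<not> f (g,h1) \<ge> 1" hence "f (g,h1) = 0" by simp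
    from trdf(3)[OF tr v this] obtain z where z: "PE (g,h1) z" "f z = 2" by blast
    have "z = (g1,h1) \<or> z = (g2,h2) \<or> z = (g3,h3)" using F(2)[OF z(2)] .
    thus False using z(1) g irH by auto
  qed
  hence "(g,h1) = (g1,h1) \<or> (g,h1) = (g2,h2) \<or> (g,h1) = (g3,h3)" by (rule F(1))
  hence gg: "g = g1" using d by auto
  have v2: "(g1,h2) \<in> PV" using F(7,11) by auto
  have "f (g1,h2) = 0" by (rule F(3)) (use d in auto)
  from trdf(3)[OF tr v2 this] obtain z where z: "PE (g1,h2) z" "f z = 2" by blast
  have "z = (g1,h1) \<or> z = (g2,h2) \<or> z = (g3,h3)" using F(2)[OF z(2)] .
  thus False using z(1) g gg irG irH by auto
qed

lemma hcover:
  fixes f :: "'a\<times>'b \<Rightarrow> nat"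
  assumes tr: "is_TRDF PV PE f"
    and Q: "\<And>v. (f v \<ge> 1 \<longleftrightarrow> v \<in> {(g1,h1),(g2,h2),(g3,h3)}) \<and> (f v = 2 \<longleftrightarrow> v \<in> {(g1,h1),(g2,h2),(g3,h3)})"
    and d: "h1 \<noteq> h2" "h1 \<noteq> h3" "g1 \<noteq> g2" "g1 \<noteq> g3"
    and h: "h \<in> VH" "\<not> EH h h2" "\<not> EH h h3"
  shows False
proof -
  note F = Qfacts[OF tr Q]
  have v: "(g1,h) \<in> PV" using F(7) h by auto
  have "f (g1,h) \<ge> 1"
  proof (rule ccontr)
    assume "\<not> f (g1,h) \<ge> 1" hence "f (g1,h) = 0" by simp
    from trdf(3)[OF tr v this] obtain z where z: "PE (g1,h) z" "f z = 2" by blast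
    have "z = (g1,h1) \<or> z = (g2,h2) \<or> z = (g3,h3)" using F(2)[OF z(2)] .
    thus False using z(1) h irG by auto
  qed
  hence "(g1,h) = (g1,h1) \<or> (g1,h) = (g2,h2) \<or> (g1,h) = (g3,h3)" by (rule F(1))
  hence hh: "h = h1" using d by auto
  have v2: "(g2,h1) \<in> PV" using F(8,10) by auto
  have "f (g2,h1) = 0" by (rule F(3)) (use d in auto)
  from trdf(3)[OF tr v2 this] obtain z where z: "PE (g2,h1) z" "f z = 2" by blast
  have "z = (g1,h1) \<or> z = (g2,h2) \<or> z = (g3,h3)" using F(2)[OF z(2)] .
  thus False using z(1) h hh irG irH by auto
qed

lemma T3:
  fixes f :: "'a\<times>'b \<Rightarrow> nat"
  assumes tr: "is_TRDF PV PE f"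
    and Q: "\<And>v. (f v \<ge> 1 \<longleftrightarrow> v \<in> {(g1,h1),(g2,h2),(g3,h3)}) \<and> (f v = 2 \<longleftrightarrow> v \<in> {(g1,h1),(g2,h2),(g3,h3)})"
  shows "triangle_centered VG EG \<and> triangle_centered VH EH"
proof -
  have p1: "{(g1,h1),(g2,h2),(g3,h3)} = {(g1,h1),(g3,h3),(g2,h2)}" by auto
  have p2: "{(g1,h1),(g2,h2),(g3,h3)} = {(g2,h2),(g3,h3),(g1,h1)}" by auto
  have p3: "{(g1,h1),(g2,h2),(g3,h3)} = {(g2,h2),(g1,h1),(g3,h3)}" by auto
  have p4: "{(g1,h1),(g2,h2),(g3,h3)} = {(g3,h3),(g1,h1),(g2,h2)}" by auto
  have Q1: "\<And>v. (f v \<ge> 1 \<longleftrightarrow> v \<in> {(g1,h1),(g3,h3),(g2,h2)}) \<and> (f v = 2 \<longleftrightarrow> v \<in> {(g1,h1),(g3,h3),(g2,h2)})"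
    using Q unfolding p1 .
  have Q2: "\<And>v. (f v \<ge> 1 \<longleftrightarrow> v \<in> {(g2,h2),(g3,h3),(g1,h1)}) \<and> (f v = 2 \<longleftrightarrow> v \<in> {(g2,h2),(g3,h3),(g1,h1)})"
    using Q unfolding p2 .
  have Q3: "\<And>v. (f v \<ge> 1 \<longleftrightarrow> v \<in> {(g2,h2),(g1,h1),(g3,h3)}) \<and> (f v = 2 \<longleftrightarrow> v \<in> {(g2,h2),(g1,h1),(g3,h3)})"
    using Q unfolding p3 .
  have Q4: "\<And>v. (f v \<ge> 1 \<longleftrightarrow> v \<in> {(g3,h3),(g1,h1),(g2,h2)}) \<and> (f v = 2 \<longleftrightarrow> v \<in> {(g3,h3),(g1,h1),(g2,h2)})"
    using Q unfolding p4 .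
  have dg: "g1 \<noteq> g2" "g1 \<noteq> g3" "g2 \<noteq> g3"
    by (rule gdist[OF tr Q], rule gdist[OF tr Q1], rule gdist[OF tr Q2])
  have dh: "h1 \<noteq> h2" "h1 \<noteq> h3" "h2 \<noteq> h3"
    by (rule hdist[OF tr Q], rule hdist[OF tr Q1], rule hdist[OF tr Q2])
  have V1: "(g1,h1) \<in> PV" "(g2,h2) \<in> PV" "(g3,h3) \<in> PV"
  proof -
    note F = Qfacts[OF tr Q]
    show "(g1,h1) \<in> PV" "(g2,h2) \<in> PV" "(g3,h3) \<in> PV" using F(7-12) by auto
  qed
  have cg: "EG g g1 \<or> EG g g2" "EG g g1 \<or> EG g g3" "EG g g2 \<or> EG g g3" if "g \<in> VG" for g
  proof -
    show "EG g g1 \<or> EG g g2"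
    proof (rule ccontr)
      assume "\<not> (EG g g1 \<or> EG g g2)"
      thus False by (intro gcover[OF tr Q4, where g=g]) (use dg dh that in auto)
    qed
    show "EG g g1 \<or> EG g g3"
    proof (rule ccontr)
      assume "\<not> (EG g g1 \<or> EG g g3)"
      thus False by (intro gcover[OF tr Q3, where g=g]) (use dg dh that in auto)
    qed
    show "EG g g2 \<or> EG g g3"
    proof (rule ccontr)
      assume "\<not> (EG g g2 \<or> EG g g3)"
      thus False by (intro gcover[OF tr Q, where g=g]) (use dg dh that in auto)
    qed
  qed
  have ch: "EH h h1 \<or> EH h h2" "EH h h1 \<or> EH h h3" "EH h h2 \<or> EH h h3" if "h \<in> VH" for h
  proof -
    show "EH h h1 \<or> EH h h2"
    proof (rule ccontr)
      assume "\<not> (EH h h1 \<or> EH h h2)"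
      thus False by (intro hcover[OF tr Q4, where h=h]) (use dg dh that in auto)
    qed
    show "EH h h1 \<or> EH h h3"
    proof (rule ccontr)
      assume "\<not> (EH h h1 \<or> EH h h3)"
      thus False by (intro hcover[OF tr Q3, where h=h]) (use dg dh that in auto)
    qed
    show "EH h h2 \<or> EH h h3"
    proof (rule ccontr)
      assume "\<not> (EH h h2 \<or> EH h h3)"
      thus False by (intro hcover[OF tr Q, where h=h]) (use dg dh that in auto)
    qed
  qed
  have tG: "triangle_centered VG EG"
  proof (rule tc_intro[OF sG, of g1 g2 g3])
    show G: "g1 \<in> VG" "g2 \<in> VG" "g3 \<in> VG" using V1 by auto
    show "EG g1 g2" "EG g2 g3" "EG g1 g3" using cg[OF G(1)] cg[OF G(2)] irG by auto
    fix v assume "v \<in> VG"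
    show "EG v g1 \<and> EG v g2 \<or> EG v g1 \<and> EG v g3 \<or> EG v g2 \<and> EG v g3"
      using cg[OF \<open>v\<in>VG\<close>] by blast
  qed
  have tH: "triangle_centered VH EH"
  proof (rule tc_intro[OF sH, of h1 h2 h3])
    show H: "h1 \<in> VH" "h2 \<in> VH" "h3 \<in> VH" using V1 by auto
    show "EH h1 h2" "EH h2 h3" "EH h1 h3" using ch[OF H(1)] ch[OF H(2)] irH by auto
    fix v assume "v \<in> VH"
    show "EH v h1 \<and> EH v h2 \<or> EH v h1 \<and> EH v h3 \<or> EH v h2 \<and> EH v h3"
      using ch[OF \<open>v\<in>VH\<close>] by blast
  qed
  show ?thesis using tG tH by simp
qed

end



context GP begin

lemma T1:
  fixes f :: "'a\<times>'b \<Rightarrow> nat"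
  assumes tr: "is_TRDF PV PE f" and T: "{v\<in>PV. f v = 2} = {(g,h)}"
  shows "card {v\<in>PV. f v \<ge> 1} \<ge> 6"
proof -
  have uT: "(g,h) \<in> {v\<in>PV. f v = 2}" by (simp only: T; simp)
  have uV: "(g,h) \<in> PV" and f2: "f (g,h) = 2" using uT by (simp_all only: mem_Collect_eq)
  have two: "\<And>v. f v = 2 \<Longrightarrow> v = (g,h)"
  proof -
    fix v assume "f v = 2"
    moreover hence "v \<in> PV" using trdf(1)[OF tr] by fastforce
    ultimately have "v \<in> {v\<in>PV. f v = 2}" by blast
    thus "v = (g,h)" using T by blast
  qed
  have gh: "g \<in> VG" "h \<in> VH" using uV by auto
  have col: "f (g,h') \<ge> 1" if "h' \<in> VH" for h'
    by (rule uncovered[OF tr]) (use that gh two irG in auto)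
  have row: "f (g',h) \<ge> 1" if "g' \<in> VG" for g'
    by (rule uncovered[OF tr]) (use that gh two irH in auto)
  obtain x where x: "x \<in> PV" "PE (g,h) x" "f x \<ge> 1" using trdf(4)[OF tr uV] f2 by auto
  obtain a b where ab: "x = (a,b)" by (cases x)
  have ab2: "EG g a" "EH h b" using x ab by auto
  hence abn: "a \<noteq> g" "b \<noteq> h" using irG irH by auto
  obtain h1 where h1: "h1 \<in> VH" "h1 \<noteq> h" using extra_elem[OF finH cH, of h h] by blast
  obtain h2 where h2: "h2 \<in> VH" "h2 \<noteq> h" "h2 \<noteq> h1" using extra_elem[OF finH cH, of h h1] by blast
  obtain g1 where g1: "g1 \<in> VG" "g1 \<noteq> g" using extra_elem[OF finG cG, of g g] by blast
  obtain g2 where g2: "g2 \<in> VG" "g2 \<noteq> g" "g2 \<noteq> g1" using extra_elem[OF finG cG, of g g1] by blast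
  have sub: "{(g,h),(g,h1),(g,h2),(g1,h),(g2,h),(a,b)} \<subseteq> {v\<in>PV. f v \<ge> 1}"
    using col row gh h1 h2 g1 g2 x ab f2 by auto
  have c6: "card {(g,h),(g,h1),(g,h2),(g1,h),(g2,h),(a,b)} = 6"
    using h1 h2 g1 g2 abn by auto
  have "finite {v\<in>PV. f v \<ge> 1}" using finV by simp
  from card_mono[OF this sub] c6 show ?thesis by simp
qed

lemma T0:
  fixes f :: "'a\<times>'b \<Rightarrow> nat"
  assumes tr: "is_TRDF PV PE f" and T: "card {v\<in>PV. f v = 2} = 0"
  shows "card {v\<in>PV. f v \<ge> 1} \<ge> 9"
proof -
  have "{v\<in>PV. f v = 2} = {}" using T finV by simp
  hence "{v\<in>PV. f v \<ge> 1} = PV"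
  proof -
    assume e: "{v\<in>PV. f v = 2} = {}"
    have "f v \<ge> 1" if "v \<in> PV" for v
    proof (rule ccontr)
      assume "\<not> f v \<ge> 1" hence "f v = 0" by simp
      from trdf(3)[OF tr that this] e show False by blast
    qed
    thus ?thesis by blast
  qed
  thus ?thesis using cardV by simp
qed

lemma lower:
  fixes f :: "'a\<times>'b \<Rightarrow> nat"
  assumes tr: "is_TRDF PV PE f"
  shows "weight PV f \<ge> 6"
proof -
  have w: "weight PV f = card {v\<in>PV. f v \<ge> 1} + card {v\<in>PV. f v = 2}" by (rule weightf[OF tr])
  have le: "card {v\<in>PV. f v = 2} \<le> card {v\<in>PV. f v \<ge> 1}" by (rule card_T_S)
  consider "card {v\<in>PV. f v = 2} = 0" | "card {v\<in>PV. f v = 2} = 1"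
    | "card {v\<in>PV. f v = 2} = 2" | "card {v\<in>PV. f v = 2} \<ge> 3" by linarith
  thus ?thesis
  proof cases
    case 1 thus ?thesis using T0[OF tr] w by fastforce
  next
    case 2
    then obtain t where "{v\<in>PV. f v = 2} = {t}" by (auto simp: card_1_singleton_iff)
    moreover obtain g h where "t = (g,h)" by (cases t)
    ultimately show ?thesis using T1[OF tr] w by fastforce
  next
    case 3
    then obtain u w where uw: "{v\<in>PV. f v = 2} = {u,w}" "u \<noteq> w" by (auto simp: card_2_iff)
    obtain g1 h1 g2 h2 where "u = (g1,h1)" "w = (g2,h2)" by (cases u, cases w)
    with uw have "card {v\<in>PV. f v \<ge> 1} \<ge> 4"
      using T2[OF tr, of g1 h1 g2 h2] by fastforce
    thus ?thesis using w 3 by linarith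
  next
    case 4 thus ?thesis using w le by linarith
  qed
qed

lemma upper_tc:
  fixes f :: "'a\<times>'b \<Rightarrow> nat"
  assumes tr: "is_TRDF PV PE f" and w6: "weight PV f = 6"
  shows "triangle_centered VG EG \<and> triangle_centered VH EH"
proof -
  have w: "weight PV f = card {v\<in>PV. f v \<ge> 1} + card {v\<in>PV. f v = 2}" by (rule weightf[OF tr])
  have le: "card {v\<in>PV. f v = 2} \<le> card {v\<in>PV. f v \<ge> 1}" by (rule card_T_S)
  consider "card {v\<in>PV. f v = 2} = 0" | "card {v\<in>PV. f v = 2} = 1"
    | "card {v\<in>PV. f v = 2} = 2" | "card {v\<in>PV. f v = 2} = 3" | "card {v\<in>PV. f v = 2} \<ge> 4" by linarith
  thus ?thesis
  proof cases
    case 1 thus ?thesis using T0[OF tr] w w6 by fastforce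
  next
    case 2
    then obtain t where "{v\<in>PV. f v = 2} = {t}" by (auto simp: card_1_singleton_iff)
    moreover obtain g h where "t = (g,h)" by (cases t)
    ultimately show ?thesis using T1[OF tr] w w6 by fastforce
  next
    case 3
    then obtain u w where uw: "{v\<in>PV. f v = 2} = {u,w}" "u \<noteq> w" by (auto simp: card_2_iff)
    obtain g1 h1 g2 h2 where "u = (g1,h1)" "w = (g2,h2)" by (cases u, cases w)
    moreover have "card {v\<in>PV. f v \<ge> 1} \<le> 4" using w w6 3 by linarith
    ultimately show ?thesis using uw T2[OF tr, of g1 h1 g2 h2] by fastforce
  next
    case 4
    have cS: "card {v\<in>PV. f v \<ge> 1} = 3" using w w6 4 by linarith
    have fin: "finite {v\<in>PV. f v \<ge> 1}" using finV by simp
    have ST: "{v\<in>PV. f v = 2} = {v\<in>PV. f v \<ge> 1}"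
      using card_subset_eq[OF fin T_sub_S] cS 4 by simp
    from 4 obtain x y z where xyz: "{v\<in>PV. f v = 2} = {x,y,z}" by (auto simp: card_3_iff)
    obtain g1 h1 g2 h2 g3 h3 where p: "x = (g1,h1)" "y = (g2,h2)" "z = (g3,h3)"
      by (cases x, cases y, cases z)
    have Q: "(f v \<ge> 1 \<longleftrightarrow> v \<in> {(g1,h1),(g2,h2),(g3,h3)}) \<and> (f v = 2 \<longleftrightarrow> v \<in> {(g1,h1),(g2,h2),(g3,h3)})" for v
    proof (cases "v \<in> PV")
      case True
      have "f v = 2 \<longleftrightarrow> v \<in> {v\<in>PV. f v = 2}" using True by simp
      moreover have "f v \<ge> 1 \<longleftrightarrow> v \<in> {v\<in>PV. f v \<ge> 1}" using True by simp
      ultimately show ?thesis using ST xyz p by simp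
    next
      case False
      hence "f v = 0" using trdf(1)[OF tr] by blast
      moreover have "v \<notin> {x,y,z}" using False xyz by blast
      ultimately show ?thesis using p by simp
    qed
    show ?thesis by (rule T3[OF tr Q])
  next
    case 5 thus ?thesis using w w6 le by linarith
  qed
qed

lemma construct:
  assumes tG: "triangle_centered VG EG" and tH: "triangle_centered VH EH"
  shows "\<exists>f0. is_TRDF PV PE f0 \<and> weight PV f0 = 6 \<and> card {v\<in>PV. f0 v = 2} = 3"
proof -
  obtain x y z where G: "x\<in>VG" "y\<in>VG" "z\<in>VG" "EG x y" "EG y z" "EG x z"
    and cvG: "\<And>v. v\<in>VG \<Longrightarrow> (EG v x \<and> EG v y) \<or> (EG v x \<and> EG v z) \<or> (EG v y \<and> EG v z)"
    using tc_elim[OF tG] by blast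
  obtain a b c where H: "a\<in>VH" "b\<in>VH" "c\<in>VH" "EH a b" "EH b c" "EH a c"
    and cvH: "\<And>v. v\<in>VH \<Longrightarrow> (EH v a \<and> EH v b) \<or> (EH v a \<and> EH v c) \<or> (EH v b \<and> EH v c)"
    using tc_elim[OF tH] by blast
  have dG: "x \<noteq> y" "y \<noteq> z" "x \<noteq> z" using G irG by metis+
  define P where "P = {(x,a),(y,b),(z,c)}"
  define f0 where "f0 = (\<lambda>v. if v \<in> P then 2 else (0::nat))"
  have PV: "P \<subseteq> PV" using G H unfolding P_def by auto
  have tr: "is_TRDF PV PE f0"
    unfolding is_TRDF_def
  proof (intro conjI ballI allI impI)
    fix v assume "v \<notin> PV" thus "f0 v = 0" using PV unfolding f0_def by auto
  next
    fix v assume "v \<in> PV" show "f0 v \<le> 2" unfolding f0_def by simp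
  next
    fix v assume v: "v \<in> PV" "f0 v = 0"
    obtain g h where gh: "v = (g,h)" by (cases v)
    have "g \<in> VG" "h \<in> VH" using v gh by auto
    hence "(EG g x \<and> EH h a) \<or> (EG g y \<and> EH h b) \<or> (EG g z \<and> EH h c)"
      using cvG cvH by blast
    thus "\<exists>u\<in>PV. PE v u \<and> f0 u = 2" using gh PV unfolding f0_def P_def by auto
  next
    fix v assume v: "v \<in> PV" "1 \<le> f0 v"
    hence "v \<in> P" unfolding f0_def by (auto split: if_splits)
    have inP: "(x,a) \<in> P" "(y,b) \<in> P" unfolding P_def by auto
    have inPV: "(x,a) \<in> PV" "(y,b) \<in> PV" using inP PV by auto
    have f2: "f0 (x,a) = 2" "f0 (y,b) = 2" using inP unfolding f0_def by auto
    from \<open>v \<in> P\<close> have "v = (x,a) \<or> v = (y,b) \<or> v = (z,c)" unfolding P_def by simp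
    thus "\<exists>u\<in>PV. PE v u \<and> 1 \<le> f0 u"
    proof (elim disjE)
      assume "v = (x,a)" thus ?thesis using inPV f2 G H by (intro bexI[of _ "(y,b)"]) auto
    next
      assume "v = (y,b)" thus ?thesis using inPV f2 G H symG symH by (intro bexI[of _ "(x,a)"]) auto
    next
      assume "v = (z,c)" thus ?thesis using inPV f2 G H symG symH by (intro bexI[of _ "(x,a)"]) auto
    qed
  qed
  have S0: "{v\<in>PV. f0 v \<ge> 1} = P" using PV unfolding f0_def by auto
  have T0: "{v\<in>PV. f0 v = 2} = P" using PV unfolding f0_def by auto
  have cP: "card P = 3" unfolding P_def using dG by auto
  have "weight PV f0 = 6" using weightf[OF tr] S0 T0 cP by simp
  thus ?thesis using tr T0 cP by blast
qed

end

lemma GP_gamma: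
  assumes "GP VG EG VH EH"
  shows "\<exists>f. is_TRDF (dprod_V VG VH) (dprod_E EG EH) f \<and>
           weight (dprod_V VG VH) f = gamma_tR (dprod_V VG VH) (dprod_E EG EH)"
    and "\<And>f. is_TRDF (dprod_V VG VH) (dprod_E EG EH) f \<Longrightarrow>
           gamma_tR (dprod_V VG VH) (dprod_E EG EH) \<le> weight (dprod_V VG VH) f"
proof -
  interpret GP VG EG VH EH by (rule assms)
  define f1 where "f1 = (\<lambda>v. if v \<in> PV then (1::nat) else 0)"
  have tr1: "is_TRDF PV PE f1"
    unfolding is_TRDF_def
  proof (intro conjI ballI allI impI)
    fix v assume "v \<notin> PV" thus "f1 v = 0" unfolding f1_def by simp
  next
    fix v assume "v \<in> PV" thus "f1 v \<le> 2" unfolding f1_def by simp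
  next
    fix v assume "v \<in> PV" "f1 v = 0" thus "\<exists>u\<in>PV. PE v u \<and> f1 u = 2" unfolding f1_def by simp
  next
    fix v assume v: "v \<in> PV"
    obtain g h where gh: "v = (g,h)" by (cases v)
    have "g \<in> VG" "h \<in> VH" using v gh by auto
    then obtain g' h' where "g' \<in> VG" "EG g g'" "h' \<in> VH" "EH h h'"
      using nG nH unfolding no_isolated_def by blast
    thus "\<exists>u\<in>PV. PE v u \<and> 1 \<le> f1 u" using gh unfolding f1_def by (intro bexI[of _ "(g',h')"]) auto
  qed
  have ex: "\<exists>w f. is_TRDF PV PE f \<and> weight PV f = w" using tr1 by blast
  show "\<exists>f. is_TRDF PV PE f \<and> weight PV f = gamma_tR PV PE"
    unfolding gamma_tR_def using LeastI_ex[OF ex] by blast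
  show "\<And>f. is_TRDF PV PE f \<Longrightarrow> gamma_tR PV PE \<le> weight PV f"
    unfolding gamma_tR_def by (rule Least_le) blast
qed

theorem theorem3p3:
  fixes VG :: "'a set" and EG :: "'a \<Rightarrow> 'a \<Rightarrow> bool"
    and VH :: "'b set" and EH :: "'b \<Rightarrow> 'b \<Rightarrow> bool"
    and f :: "'a \<times> 'b \<Rightarrow> nat"
  assumes "simple_graph VG EG" and "no_isolated VG EG" and "card VG \<ge> 3"
    and "simple_graph VH EH" and "no_isolated VH EH" and "card VH \<ge> 3"
    and "gamma_tR_function (dprod_V VG VH) (dprod_E EG EH) f"
    and "\<forall>f'. gamma_tR_function (dprod_V VG VH) (dprod_E EG EH) f' \<longrightarrow>
           card {v \<in> dprod_V VG VH. f' v = 2} \<le> card {v \<in> dprod_V VG VH. f v = 2}"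
  shows "((triangle_centered VG EG \<and> triangle_centered VH EH)
            \<longleftrightarrow> gamma_tR (dprod_V VG VH) (dprod_E EG EH) = 6)
       \<and> (gamma_tR (dprod_V VG VH) (dprod_E EG EH) = 6
            \<longleftrightarrow> card {v \<in> dprod_V VG VH. f v \<ge> 1} = 3)"
proof -
  have gp: "GP VG EG VH EH" using assms(1-6) by unfold_locales
  interpret GP VG EG VH EH by (rule gp)
  note GG = GP_gamma[OF gp]
  obtain fm where fm: "is_TRDF PV PE fm" "weight PV fm = gamma_tR PV PE" using GG(1) by blast
  have g6: "gamma_tR PV PE \<ge> 6" using lower[OF fm(1)] fm(2) by simp
  have trf: "is_TRDF PV PE f" and wf: "weight PV f = gamma_tR PV PE"
    using assms(7) unfolding gamma_tR_function_def by auto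
  have wfe: "weight PV f = card {v\<in>PV. f v \<ge> 1} + card {v\<in>PV. f v = 2}" by (rule weightf[OF trf])
  have le: "card {v\<in>PV. f v = 2} \<le> card {v\<in>PV. f v \<ge> 1}" by (rule card_T_S)
  have i_ii: "gamma_tR PV PE = 6" if tc: "triangle_centered VG EG \<and> triangle_centered VH EH"
  proof -
    obtain f0 where "is_TRDF PV PE f0" "weight PV f0 = 6" using construct tc by blast
    hence "gamma_tR PV PE \<le> 6" using GG(2) by metis
    thus ?thesis using g6 by simp
  qed
  have ii_i: "triangle_centered VG EG \<and> triangle_centered VH EH" if "gamma_tR PV PE = 6"
    using upper_tc[OF fm(1)] fm(2) that by simp
  have ii_iii: "card {v\<in>PV. f v \<ge> 1} = 3" if g: "gamma_tR PV PE = 6"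
  proof -
    obtain f0 where f0: "is_TRDF PV PE f0" "weight PV f0 = 6" "card {v\<in>PV. f0 v = 2} = 3"
      using construct ii_i[OF g] by blast
    have "gamma_tR_function PV PE f0" unfolding gamma_tR_function_def using f0 g by simp
    hence "card {v\<in>PV. f0 v = 2} \<le> card {v\<in>PV. f v = 2}" using assms(8) by blast
    thus ?thesis using f0(3) wfe wf g le by linarith
  qed
  have iii_ii: "gamma_tR PV PE = 6" if "card {v\<in>PV. f v \<ge> 1} = 3"
    using that wfe wf le g6 by linarith
  show ?thesis using i_ii ii_i ii_iii iii_ii by blast
qed

end
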